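(* Let $X$ be an irreducible positive recurrent Markov chain on a countable state space $S$ with transition matrix $P$ and stationary distribution $\pi$. Fix a finite nonempty set $K\subseteq S$ and a sequence $(A_n:n\ge1)$ of finite subsets of $S$ with $A_n\supseteq K$ and $A_n\nearrow S$. For each $n$, with $T_n=\inf\{j\ge1:X_j\notin A_n\}$, let $G_n(x,y)=P_x(X_{T_K}=y,\,T_K<T_n)$ for $x,y\in K$, and assume $G_n$ is irreducible. Define two stochastic matrices on $K$: (1) (Perron–Frobenius) Let $\lambda_n>0$ be the Perron eigenvalue of $G_n$ with positive left and right eigenvectors $\nu_n,h_n$ normalized so that $\sum_{x\in K}\nu_n(x)h_n(x)=1$; set $P_{1,n}(x,y)=G_n(x,y)h_n(y)/(\lambda_n h_n(x))$, whose unique stationary distribution is $\pi_{1,n}(x)=\nu_n(x)h_n(x)$. (2) (Row normalization) Set $P_{2,n}(x,y)=G_n(x,y)/\sum_{y'\in K}G_n(x,y')$, with unique stationary distribution $\pi_{2,n}$. For a non-negative function $r:S\to[0,\infty)$ and $i=1,2$ define $$\tilde\pi_{i,n}(r)=\frac{E_{\pi_{i,n}}\sum_{j=0}^{(T_n\wedge T_K)-1}r(X_j)}{E_{\pi_{i,n}}(T_n\wedge T_K)}.$$ Then $\tilde\pi_{i,n}(r)\to\pi r=\sum_{x\in S}\pi(x)r(x)$ as $n\to\infty$, for $i=1,2$.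
   Context: $P_x,E_x$ denote probability and expectation for the chain started at $x$, and $E_\mu=\sum_x\mu(x)E_x$. $T_K=\inf\{j\ge1:X_j\in K\}$, and $a\wedge b=\min(a,b)$. *)

theory Defs
  imports "HOL-Analysis.Analysis"
begin

text \<open>Markov chain with transition matrix P on a countable type. 
  kp P B j x y = P_x(X_1,...,X_j \<in> B, X_j = y)  (for j = 0: indicator x = y).\<close>
fun kp :: "('a \<Rightarrow> 'a \<Rightarrow> real) \<Rightarrow> 'a set \<Rightarrow> nat \<Rightarrow> 'a \<Rightarrow> 'a \<Rightarrow> ennreal" where
  "kp P B 0 x y = (if x = y then 1 else 0)"
| "kp P B (Suc j) x y =
     (\<integral>\<^sup>+ z. kp P B j x z * ennreal (P z y) \<partial>count_space UNIV) * indicator B y"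

definition stochastic_matrix :: "('a \<Rightarrow> 'a \<Rightarrow> real) \<Rightarrow> bool" where
  "stochastic_matrix P \<longleftrightarrow> (\<forall>x y. 0 \<le> P x y) \<and> (\<forall>x. (P x has_sum 1) UNIV)"

definition irreducible_chain :: "('a \<Rightarrow> 'a \<Rightarrow> real) \<Rightarrow> bool" where
  "irreducible_chain P \<longleftrightarrow> (\<forall>x y. \<exists>j. kp P UNIV j x y > 0)"

text \<open>E_x T_x = sum_{j \<ge> 0} P_x(T_x > j) with T_x = inf{j \<ge> 1. X_j = x}.\<close>
definition exp_return_time :: "('a \<Rightarrow> 'a \<Rightarrow> real) \<Rightarrow> 'a \<Rightarrow> ennreal" where
  "exp_return_time P x = (\<Sum>j. \<integral>\<^sup>+ y. kp P (- {x}) j x y \<partial>count_space UNIV)"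

definition positive_recurrent :: "('a \<Rightarrow> 'a \<Rightarrow> real) \<Rightarrow> bool" where
  "positive_recurrent P \<longleftrightarrow> (\<forall>x. exp_return_time P x < \<infinity>)"

definition stationary_dist :: "('a \<Rightarrow> 'a \<Rightarrow> real) \<Rightarrow> ('a \<Rightarrow> real) \<Rightarrow> bool" where
  "stationary_dist P \<pi> \<longleftrightarrow> (\<forall>x. 0 \<le> \<pi> x) \<and> (\<pi> has_sum 1) UNIV \<and>
     (\<forall>y. ((\<lambda>x. \<pi> x * P x y) has_sum \<pi> y) UNIV)"

text \<open>G_n(x,y) = P_x(X_{T_K} = y, T_K < T_n), for y \<in> K \<subseteq> A:
  sum over m of P_x(X_1..X_m \<in> A - K, X_{m+1} = y).\<close>
definition hit_matrix :: "('a \<Rightarrow> 'a \<Rightarrow> real) \<Rightarrow> 'a set \<Rightarrow> 'a set \<Rightarrow> 'a \<Rightarrow> 'a \<Rightarrow> real" where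
  "hit_matrix P A K x y =
     enn2real (\<Sum>m. \<integral>\<^sup>+ z. kp P (A - K) m x z * ennreal (P z y) \<partial>count_space UNIV)"

text \<open>E_x sum_{j=0}^{(T_A \<and> T_K) - 1} r(X_j) = sum_j E_x[r(X_j); X_1..X_j \<in> A - K].\<close>
definition killed_reward :: "('a \<Rightarrow> 'a \<Rightarrow> real) \<Rightarrow> 'a set \<Rightarrow> 'a set \<Rightarrow> ('a \<Rightarrow> real) \<Rightarrow> 'a \<Rightarrow> ennreal" where
  "killed_reward P A K r x =
     (\<Sum>j. \<integral>\<^sup>+ z. kp P (A - K) j x z * ennreal (r z) \<partial>count_space UNIV)"

definition killed_time :: "('a \<Rightarrow> 'a \<Rightarrow> real) \<Rightarrow> 'a set \<Rightarrow> 'a set \<Rightarrow> 'a \<Rightarrow> ennreal" where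
  "killed_time P A K x = killed_reward P A K (\<lambda>_. 1) x"

definition tilde_pi ::
  "('a \<Rightarrow> 'a \<Rightarrow> real) \<Rightarrow> 'a set \<Rightarrow> 'a set \<Rightarrow> ('a \<Rightarrow> real) \<Rightarrow> ('a \<Rightarrow> real) \<Rightarrow> ennreal" where
  "tilde_pi P A K \<mu> r =
     (\<Sum>x\<in>K. ennreal (\<mu> x) * killed_reward P A K r x) /
     (\<Sum>x\<in>K. ennreal (\<mu> x) * killed_time P A K x)"

fun mpow :: "'a set \<Rightarrow> ('a \<Rightarrow> 'a \<Rightarrow> real) \<Rightarrow> nat \<Rightarrow> 'a \<Rightarrow> 'a \<Rightarrow> real" where
  "mpow K G 0 x y = (if x = y then 1 else 0)"
| "mpow K G (Suc m) x y = (\<Sum>z\<in>K. mpow K G m x z * G z y)"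

definition irreducible_on :: "'a set \<Rightarrow> ('a \<Rightarrow> 'a \<Rightarrow> real) \<Rightarrow> bool" where
  "irreducible_on K G \<longleftrightarrow> (\<forall>x\<in>K. \<forall>y\<in>K. (\<forall>z\<in>K. 0 \<le> G x z) \<and> (\<exists>m. mpow K G (Suc m) x y > 0))"

definition row_normalize :: "'a set \<Rightarrow> ('a \<Rightarrow> 'a \<Rightarrow> real) \<Rightarrow> 'a \<Rightarrow> 'a \<Rightarrow> real" where
  "row_normalize K G x y = G x y / (\<Sum>y'\<in>K. G x y')"

definition stationary_on :: "'a set \<Rightarrow> ('a \<Rightarrow> 'a \<Rightarrow> real) \<Rightarrow> ('a \<Rightarrow> real) \<Rightarrow> bool" where
  "stationary_on K Q p \<longleftrightarrow> (\<forall>x\<in>K. 0 \<le> p x) \<and> (\<Sum>x\<in>K. p x) = 1 \<and>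
     (\<forall>y\<in>K. (\<Sum>x\<in>K. p x * Q x y) = p y)"

end

theory Submission
  imports Defs
begin


lemma kp_nonneg_mono:
  assumes "B \<subseteq> B'"
  shows "kp P B j x y \<le> kp P B' j x y"
proof (induction j arbitrary: y)
  case 0 then show ?case by simp
next
  case (Suc j)
  have "(\<integral>\<^sup>+ z. kp P B j x z * ennreal (P z y) \<partial>count_space UNIV) \<le>
        (\<integral>\<^sup>+ z. kp P B' j x z * ennreal (P z y) \<partial>count_space UNIV)"
    by (intro nn_integral_mono mult_right_mono Suc) auto
  moreover have "indicator B y \<le> (indicator B' y :: ennreal)"
    using assms by (auto simp: indicator_def)
  ultimately show ?case by (simp add: mult_mono)
qed

lemma swap_cs:
  fixes f :: "'a::countable \<Rightarrow> 'b::countable \<Rightarrow> ennreal"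
  shows "(\<integral>\<^sup>+x. \<integral>\<^sup>+y. f x y \<partial>count_space UNIV \<partial>count_space UNIV) =
         (\<integral>\<^sup>+y. \<integral>\<^sup>+x. f x y \<partial>count_space UNIV \<partial>count_space UNIV)"
  by (rule nn_integral_count_space_nn_integral) auto



lemma kp_incseq: "incseq B \<Longrightarrow> incseq (\<lambda>n. kp P (B n) j x y)"
  by (auto simp: incseq_def intro!: kp_nonneg_mono)

lemma kp_lim:
  assumes inc: "incseq B" and U: "(\<Union>n. B n) = C"
  shows "(\<lambda>n. kp P (B n) j x y) \<longlonglongrightarrow> kp P C j x y"
proof (induction j arbitrary: y)
  case 0 then show ?case by simp
next
  case (Suc j)
  define I where "I n = (\<integral>\<^sup>+ z. kp P (B n) j x z * ennreal (P z y) \<partial>count_space UNIV)" for n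
  have I: "I \<longlonglongrightarrow> (\<integral>\<^sup>+ z. kp P C j x z * ennreal (P z y) \<partial>count_space UNIV)"
    unfolding I_def
  proof (rule nn_integral_LIMSEQ)
    show "incseq (\<lambda>n z. kp P (B n) j x z * ennreal (P z y))"
      using kp_incseq[OF inc] by (auto simp: incseq_def le_fun_def intro!: mult_right_mono)
    fix z show "(\<lambda>n. kp P (B n) j x z * ennreal (P z y)) \<longlonglongrightarrow> kp P C j x z * ennreal (P z y)"
      using ennreal_tendsto_cmult[OF _ Suc, of "ennreal (P z y)" z] by (simp add: mult.commute)
  qed auto
  show ?case
  proof (cases "y \<in> C")
    case True
    then obtain n0 where "y \<in> B n0" using U by auto
    then have ev: "\<forall>\<^sub>F n in sequentially. kp P (B n) (Suc j) x y = I n"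
      using inc unfolding eventually_sequentially I_def incseq_def by (intro exI[of _ n0]) (auto simp: subset_iff)
    show ?thesis using Lim_transform_eventually[OF I ev[THEN eventually_mono]] True
      by (simp add: I_def eq_commute)
  next
    case False
    then have "\<And>n. y \<notin> B n" using U by auto
    then show ?thesis using False by simp
  qed
qed



lemma nn_has_sum:
  fixes f :: "'b \<Rightarrow> real"
  assumes "(f has_sum s) A" "\<And>x. x \<in> A \<Longrightarrow> f x \<ge> 0"
  shows "(\<integral>\<^sup>+x. ennreal (f x) \<partial>count_space A) = ennreal s"
proof -
  have s: "f summable_on A" "infsum f A = s" using assms(1) has_sum_iff by blast+
  have "Infinite_Sum.abs_summable_on f A"
    using s(1) assms(2) summable_on_iff_abs_summable_on_real
    by (metis (no_types, lifting) real_norm_def abs_of_nonneg summable_on_cong)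
  then have "Infinite_Set_Sum.abs_summable_on f A" using abs_summable_equivalent by blast
  then show ?thesis
    using nn_integral_conv_infsetsum[of f A] assms(2) infsetsum_infsum[OF \<open>Infinite_Set_Sum.abs_summable_on f A\<close>] s(2) by simp
qed

lemma tendsto_mult_ennreal_const:
  "(f \<longlongrightarrow> l) F \<Longrightarrow> ((\<lambda>n. f n * ennreal c) \<longlongrightarrow> l * ennreal c) F"
  using ennreal_tendsto_cmult[of "ennreal c" f l F] by (simp add: mult.commute)

lemma suminf_int_lim:
  fixes F :: "nat \<Rightarrow> nat \<Rightarrow> 'a \<Rightarrow> ennreal"
  assumes inc: "\<And>j z. incseq (\<lambda>n. F n j z)" and lim: "\<And>j z. (\<lambda>n. F n j z) \<longlonglongrightarrow> F' j z"
  shows "(\<lambda>n. \<Sum>j. \<integral>\<^sup>+z. F n j z \<partial>count_space UNIV) \<longlonglongrightarrow> (\<Sum>j. \<integral>\<^sup>+z. F' j z \<partial>count_space UNIV)"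
proof -
  have "(\<lambda>n. \<integral>\<^sup>+j. (\<integral>\<^sup>+z. F n j z \<partial>count_space UNIV) \<partial>count_space UNIV) \<longlonglongrightarrow>
        (\<integral>\<^sup>+j. (\<integral>\<^sup>+z. F' j z \<partial>count_space UNIV) \<partial>count_space UNIV)"
  proof (rule nn_integral_LIMSEQ)
    show "incseq (\<lambda>n j. \<integral>\<^sup>+z. F n j z \<partial>count_space UNIV)"
      using inc by (auto simp: incseq_def le_fun_def intro!: nn_integral_mono)
    fix j show "(\<lambda>n. \<integral>\<^sup>+z. F n j z \<partial>count_space UNIV) \<longlonglongrightarrow> (\<integral>\<^sup>+z. F' j z \<partial>count_space UNIV)"
      by (rule nn_integral_LIMSEQ) (use inc lim in \<open>auto simp: incseq_def le_fun_def\<close>)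
  qed auto
  then show ?thesis by (simp add: nn_integral_count_space_nat)
qed

lemma killed_reward_lim:
  assumes "incseq A" "(\<Union>n. A n) = UNIV"
  shows "(\<lambda>n. killed_reward P (A n) K r x) \<longlonglongrightarrow> killed_reward P UNIV K r x"
proof -
  have inc: "incseq (\<lambda>n. A n - K)" using assms(1) by (auto simp: incseq_def)
  have U: "(\<Union>n. A n - K) = UNIV - K" using assms(2) by auto
  show ?thesis unfolding killed_reward_def
    by (rule suminf_int_lim[where F="\<lambda>n j z. kp P (A n - K) j x z * ennreal (r z)"
        and F'="\<lambda>j z. kp P (UNIV - K) j x z * ennreal (r z)"])
       (use kp_incseq[OF inc] kp_lim[OF inc U] in
         \<open>auto simp: incseq_def intro!: mult_right_mono tendsto_mult_ennreal_const\<close>)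
qed

lemma hit_lim_enn:
  assumes "incseq A" "(\<Union>n. A n) = UNIV"
  shows "(\<lambda>n. \<Sum>m. \<integral>\<^sup>+ z. kp P (A n - K) m x z * ennreal (P z y) \<partial>count_space UNIV) \<longlonglongrightarrow>
         (\<Sum>m. \<integral>\<^sup>+ z. kp P (UNIV - K) m x z * ennreal (P z y) \<partial>count_space UNIV)"
proof -
  have inc: "incseq (\<lambda>n. A n - K)" using assms(1) by (auto simp: incseq_def)
  have U: "(\<Union>n. A n - K) = UNIV - K" using assms(2) by auto
  show ?thesis
    by (rule suminf_int_lim[where F="\<lambda>n j z. kp P (A n - K) j x z * ennreal (P z y)"
        and F'="\<lambda>j z. kp P (UNIV - K) j x z * ennreal (P z y)"])
       (use kp_incseq[OF inc] kp_lim[OF inc U] in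
         \<open>auto simp: incseq_def intro!: mult_right_mono tendsto_mult_ennreal_const\<close>)
qed



abbreviation "cs \<equiv> count_space UNIV"

lemma nn_point_le: "f x \<le> (\<integral>\<^sup>+u. f u \<partial>count_space UNIV)"
proof -
  have "f x = (\<integral>\<^sup>+u. f u * indicator {x} u \<partial>count_space UNIV)" by simp
  also have "\<dots> \<le> (\<integral>\<^sup>+u. f u \<partial>count_space UNIV)"
    by (intro nn_integral_mono) (auto simp: indicator_def)
  finally show ?thesis .
qed

lemma int_delta: "(\<integral>\<^sup>+u. f u * (if u = x then 1 else 0) \<partial>count_space UNIV) = f x"
proof -
  have "(\<integral>\<^sup>+u. f u * (if u = x then 1 else 0) \<partial>count_space UNIV) = (\<integral>\<^sup>+u. f u * indicator {x} u \<partial>count_space UNIV)"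
    by (intro nn_integral_cong) (auto simp: indicator_def)
  then show ?thesis by simp
qed

lemma int_delta': "(\<integral>\<^sup>+u. (if x = u then 1 else 0) * f u \<partial>count_space UNIV) = f x"
  using int_delta[of f x] by (simp add: mult.commute eq_commute)

lemma row_sum_one:
  assumes "stochastic_matrix P"
  shows "(\<integral>\<^sup>+y. ennreal (P z y) \<partial>count_space UNIV) = 1"
  using assms nn_has_sum[where f="P z" and s=1 and A=UNIV] by (simp add: stochastic_matrix_def)

lemma swap_cs':
  fixes f :: "'a::countable \<Rightarrow> 'b::countable \<Rightarrow> ennreal"
  shows "(\<integral>\<^sup>+x. (\<integral>\<^sup>+y. f x y \<partial>count_space UNIV) \<partial>count_space UNIV) =
         (\<integral>\<^sup>+y. (\<integral>\<^sup>+x. f x y \<partial>count_space UNIV) \<partial>count_space UNIV)"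
  by (rule nn_integral_count_space_nn_integral) auto

lemma inv_kp:
  fixes P :: "'a::countable \<Rightarrow> 'a \<Rightarrow> real" and \<mu> :: "'a \<Rightarrow> ennreal"
  assumes inv: "\<And>z. (\<integral>\<^sup>+u. \<mu> u * ennreal (P u z) \<partial>count_space UNIV) = \<mu> z"
  shows "(\<integral>\<^sup>+u. \<mu> u * kp P UNIV j u z \<partial>count_space UNIV) = \<mu> z"
proof (induction j arbitrary: z)
  case 0 then show ?case by (simp add: int_delta eq_commute)
next
  case (Suc j)
  have "(\<integral>\<^sup>+u. \<mu> u * kp P UNIV (Suc j) u z \<partial>cs) =
        (\<integral>\<^sup>+u. (\<integral>\<^sup>+v. \<mu> u * (kp P UNIV j u v * ennreal (P v z)) \<partial>cs) \<partial>cs)"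
    by (simp add: nn_integral_cmult)
  also have "\<dots> = (\<integral>\<^sup>+v. (\<integral>\<^sup>+u. \<mu> u * kp P UNIV j u v \<partial>cs) * ennreal (P v z) \<partial>cs)"
    by (subst swap_cs') (simp add: nn_integral_multc[symmetric] mult.assoc)
  also have "\<dots> = \<mu> z" using Suc inv by simp
  finally show ?case .
qed

lemma kp_pos_imp:
  fixes P :: "'a::countable \<Rightarrow> 'a \<Rightarrow> real" and \<mu> :: "'a \<Rightarrow> ennreal"
  assumes inv: "\<And>z. (\<integral>\<^sup>+u. \<mu> u * ennreal (P u z) \<partial>count_space UNIV) = \<mu> z"
  shows "\<mu> u * kp P UNIV j u z \<le> \<mu> z"
  using nn_point_le[of "\<lambda>u. \<mu> u * kp P UNIV j u z" u] inv_kp[OF inv, of j z] by simp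

lemma exit_step:
  fixes P :: "'a::countable \<Rightarrow> 'a \<Rightarrow> real"
  assumes st: "stochastic_matrix P"
  shows "(\<integral>\<^sup>+z. kp P B (Suc m) x z \<partial>cs) +
     (\<integral>\<^sup>+y. indicator (- B) y * (\<integral>\<^sup>+z. kp P B m x z * ennreal (P z y) \<partial>cs) \<partial>cs) =
     (\<integral>\<^sup>+z. kp P B m x z \<partial>cs)"
proof -
  have "(\<integral>\<^sup>+z. kp P B (Suc m) x z \<partial>cs) +
     (\<integral>\<^sup>+y. indicator (- B) y * (\<integral>\<^sup>+z. kp P B m x z * ennreal (P z y) \<partial>cs) \<partial>cs) =
     (\<integral>\<^sup>+y. (\<integral>\<^sup>+z. kp P B m x z * ennreal (P z y) \<partial>cs) \<partial>cs)"
    by (subst nn_integral_add[symmetric]) (auto intro!: nn_integral_cong simp: indicator_def)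
  also have "\<dots> = (\<integral>\<^sup>+z. kp P B m x z * (\<integral>\<^sup>+y. ennreal (P z y) \<partial>cs) \<partial>cs)"
    by (subst swap_cs') (simp add: nn_integral_cmult)
  also have "\<dots> = (\<integral>\<^sup>+z. kp P B m x z \<partial>cs)" using row_sum_one[OF st] by simp
  finally show ?thesis .
qed

lemma exit_bound:
  fixes P :: "'a::countable \<Rightarrow> 'a \<Rightarrow> real"
  assumes st: "stochastic_matrix P"
  shows "(\<Sum>m. \<integral>\<^sup>+y. indicator (- B) y * (\<integral>\<^sup>+z. kp P B m x z * ennreal (P z y) \<partial>cs) \<partial>cs) \<le> 1"
proof -
  define c where "c m = (\<integral>\<^sup>+y. indicator (- B) y * (\<integral>\<^sup>+z. kp P B m x z * ennreal (P z y) \<partial>cs) \<partial>cs)" for m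
  define a where "a m = (\<integral>\<^sup>+z. kp P B m x z \<partial>cs)" for m
  have step: "a (Suc m) + c m = a m" for m unfolding a_def c_def by (rule exit_step[OF st])
  have a0: "a 0 = 1" using int_delta'[of x "\<lambda>_. 1"] by (simp add: a_def)
  have "(\<Sum>i<N. c i) + a N = 1" for N
  proof (induction N)
    case 0 then show ?case using a0 by simp
  next
    case (Suc N)
    have "(\<Sum>i<Suc N. c i) + a (Suc N) = (\<Sum>i<N. c i) + (a (Suc N) + c N)"
      by (simp add: algebra_simps)
    also have "\<dots> = 1" using step Suc by simp
    finally show ?case .
  qed
  then have "(\<Sum>i<N. c i) \<le> 1" for N by (metis le_iff_add)
  then show ?thesis unfolding c_def[symmetric] by (intro suminf_le_const) auto
qed



lemma suminf_shift0:
  fixes f :: "nat \<Rightarrow> ennreal"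
  assumes "f 0 = 0" shows "(\<Sum>n. f (Suc n)) = (\<Sum>n. f n)"
  using sums_Suc[OF summable_sums[OF summableI, of "\<lambda>n. f (Suc n)"]] assms sums_unique by force

lemma stat_inv:
  fixes P :: "'a::countable \<Rightarrow> 'a \<Rightarrow> real"
  assumes st: "stochastic_matrix P" and stat: "stationary_dist P \<pi>"
  shows "(\<integral>\<^sup>+u. ennreal (\<pi> u) * ennreal (P u z) \<partial>count_space UNIV) = ennreal (\<pi> z)"
proof -
  have "(\<integral>\<^sup>+u. ennreal (\<pi> u * P u z) \<partial>count_space UNIV) = ennreal (\<pi> z)"
    using stat st by (intro nn_has_sum) (auto simp: stationary_dist_def stochastic_matrix_def)
  moreover have "ennreal (\<pi> u * P u z) = ennreal (\<pi> u) * ennreal (P u z)" for u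
    using stat st by (intro ennreal_mult) (auto simp: stationary_dist_def stochastic_matrix_def)
  ultimately show ?thesis by simp
qed

lemma stat_total:
  assumes stat: "stationary_dist P \<pi>"
  shows "(\<integral>\<^sup>+u. ennreal (\<pi> u) \<partial>count_space UNIV) = 1"
  using stat by (intro nn_has_sum[where s=1, simplified]) (auto simp: stationary_dist_def)

lemma cycle_measure:
  fixes P :: "'a::countable \<Rightarrow> 'a \<Rightarrow> real"
  assumes st: "stochastic_matrix P" and irr: "irreducible_chain P"
    and stat: "stationary_dist P \<pi>" and K: "finite K" "K \<noteq> {}"
  shows "ennreal (\<pi> z) = (\<Sum>j. \<Sum>x\<in>K. ennreal (\<pi> x) * kp P (UNIV - K) j x z)"
proof -
  define B where "B = UNIV - K"
  define p where "p z = ennreal (\<pi> z)" for z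
  have inv: "(\<integral>\<^sup>+u. p u * ennreal (P u z) \<partial>cs) = p z" for z
    unfolding p_def by (rule stat_inv[OF st stat])
  define M where "M j z = (\<Sum>x\<in>K. p x * kp P B j x z)" for j z
  have M0: "M 0 z = p z * indicator K z" for z
  proof -
    have "p x * kp P B 0 x z = (if x = z then p z else 0)" for x by simp
    then show ?thesis using K(1) by (simp add: M_def indicator_def)
  qed
  have MS: "M (Suc j) z = (\<integral>\<^sup>+u. M j u * ennreal (P u z) \<partial>cs) * indicator B z" for j z
  proof -
    have "M (Suc j) z = (\<Sum>x\<in>K. (\<integral>\<^sup>+u. p x * (kp P B j x u * ennreal (P u z)) \<partial>cs)) * indicator B z"
      by (simp add: M_def sum_distrib_right nn_integral_cmult mult.assoc)
    also have "\<dots> = (\<integral>\<^sup>+u. M j u * ennreal (P u z) \<partial>cs) * indicator B z"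
      by (simp add: M_def nn_integral_sum[symmetric] sum_distrib_right mult.assoc)
    finally show ?thesis .
  qed
  have part: "(\<Sum>j<N. M j z) \<le> p z" for N z
  proof (induction N arbitrary: z)
    case 0 then show ?case by simp
  next
    case (Suc N)
    have "(\<Sum>j<Suc N. M j z) = M 0 z + (\<Sum>j<N. M (Suc j) z)"
      by (rule sum.lessThan_Suc_shift)
    also have "(\<Sum>j<N. M (Suc j) z) = (\<integral>\<^sup>+u. (\<Sum>j<N. M j u) * ennreal (P u z) \<partial>cs) * indicator B z"
      by (simp add: MS sum_distrib_right[symmetric] nn_integral_sum[symmetric])
    also have "\<dots> \<le> (\<integral>\<^sup>+u. p u * ennreal (P u z) \<partial>cs) * indicator B z"
      by (intro mult_right_mono nn_integral_mono mult_right_mono Suc) auto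
    also have "\<dots> = p z * indicator B z" by (simp add: inv)
    finally have "(\<Sum>j<Suc N. M j z) \<le> p z * indicator K z + p z * indicator B z"
      by (simp add: M0 add_left_mono)
    also have "\<dots> = p z" by (auto simp: B_def indicator_def)
    finally show ?case .
  qed
  define m where "m z = (\<Sum>j. M j z)" for z
  have m_le: "m z \<le> p z" for z unfolding m_def by (intro suminf_le_const summableI part)
  have p_fin: "p z < \<infinity>" for z by (simp add: p_def)
  have m_fin: "m z < \<infinity>" for z using m_le[of z] p_fin[of z] by (meson le_less_trans)
  have mB: "(\<integral>\<^sup>+u. m u * ennreal (P u z) \<partial>cs) = m z" if "z \<in> B" for z
  proof -
    have "(\<integral>\<^sup>+u. m u * ennreal (P u z) \<partial>cs) = (\<Sum>j. \<integral>\<^sup>+u. M j u * ennreal (P u z) \<partial>cs)"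
      unfolding m_def by (simp add: nn_integral_suminf[symmetric])
    also have "\<dots> = (\<Sum>j. M (Suc j) z)" using that by (simp add: MS)
    also have "\<dots> = m z" unfolding m_def
      by (rule suminf_shift0) (use that in \<open>simp add: M0 B_def\<close>)
    finally show ?thesis .
  qed
  have mK: "m z = p z" if "z \<in> K" for z
  proof -
    have "M 0 z \<le> m z" unfolding m_def using sum_le_suminf[OF summableI, of "{0}" "\<lambda>j. M j z"] by simp
    then show ?thesis using m_le[of z] that by (simp add: M0 antisym)
  qed
  define d where "d z = p z - m z" for z
  have dm: "d z + m z = p z" for z unfolding d_def using m_le diff_add_cancel_ennreal by blast
  have dK: "d z = 0" if "z \<in> K" for z using mK[OF that] p_fin[of z] by (simp add: d_def diff_eq_0_iff_ennreal)
  have dB: "(\<integral>\<^sup>+u. d u * ennreal (P u z) \<partial>cs) = d z" if "z \<in> B" for z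
  proof -
    have "(\<integral>\<^sup>+u. d u * ennreal (P u z) \<partial>cs) + m z = (\<integral>\<^sup>+u. (d u + m u) * ennreal (P u z) \<partial>cs)"
      by (simp add: distrib_right nn_integral_add mB[OF that])
    also have "\<dots> = d z + m z" by (simp add: dm inv)
    finally show ?thesis using m_fin[of z]
      by (metis add.commute ennreal_add_left_cancel less_imp_neq top.not_eq_extremum)
  qed
  have dge: "d z \<le> (\<integral>\<^sup>+u. d u * ennreal (P u z) \<partial>cs)" for z
    by (cases "z \<in> K") (auto simp: dK dB B_def)
  have dtot_le: "(\<integral>\<^sup>+z. d z \<partial>cs) \<le> 1"
  proof -
    have "(\<integral>\<^sup>+z. d z \<partial>cs) \<le> (\<integral>\<^sup>+z. p z \<partial>cs)"
      by (intro nn_integral_mono) (metis dm le_iff_add)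
    then show ?thesis using stat_total[OF stat] by (simp add: p_def)
  qed
  have tot: "(\<integral>\<^sup>+z. (\<integral>\<^sup>+u. d u * ennreal (P u z) \<partial>cs) \<partial>cs) = (\<integral>\<^sup>+z. d z \<partial>cs)"
    by (subst swap_cs') (simp add: nn_integral_cmult row_sum_one[OF st])
  have dinv: "(\<integral>\<^sup>+u. d u * ennreal (P u z) \<partial>cs) = d z" for z
  proof -
    define g where "g z = (\<integral>\<^sup>+u. d u * ennreal (P u z) \<partial>cs)" for z
    have "(\<integral>\<^sup>+z. g z - d z \<partial>cs) = (\<integral>\<^sup>+z. g z \<partial>cs) - (\<integral>\<^sup>+z. d z \<partial>cs)"
      using dtot_le dge by (intro nn_integral_diff) (auto simp: g_def top_unique)
    also have "\<dots> = 0" using tot dtot_le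
      by (simp add: g_def diff_eq_0_iff_ennreal) (metis ennreal_one_less_top le_less_trans)
    finally have "(\<integral>\<^sup>+z. g z - d z \<partial>cs) = 0" .
    then have "g z - d z = 0" by (simp add: nn_integral_0_iff_AE AE_count_space)
    then have "g z \<le> d z" by (rule ennreal_minus_eq_0)
    then show ?thesis using dge[of z] by (simp add: g_def)
  qed
  obtain x0 where x0: "x0 \<in> K" using K(2) by auto
  have d0: "d u = 0" for u
  proof -
    obtain j where j: "kp P UNIV j u x0 > 0" using irr by (auto simp: irreducible_chain_def)
    have "d u * kp P UNIV j u x0 \<le> d x0" by (rule kp_pos_imp[OF dinv])
    then have "d u * kp P UNIV j u x0 = 0" using dK[OF x0] by simp
    then show ?thesis using j by (metis mult_eq_0_iff order_less_irrefl)
  qed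
  have "m z = p z" for z using dm[of z] d0[of z] by simp
  then show ?thesis by (simp add: m_def M_def p_def B_def)
qed



lemma mpow_nonneg:
  assumes "\<forall>x\<in>K. \<forall>y\<in>K. 0 \<le> G x y" "y \<in> K"
  shows "0 \<le> mpow K G m x y"
  using assms(2) by (induction m arbitrary: y) (auto intro!: sum_nonneg mult_nonneg_nonneg assms(1)[rule_format])

lemma mpow_left_inv:
  assumes fin: "finite K" and inv: "\<forall>y\<in>K. (\<Sum>x\<in>K. d x * G x y) = d y" and y: "y \<in> K"
  shows "(\<Sum>x\<in>K. d x * mpow K G m x y) = d y"
  using y
proof (induction m arbitrary: y)
  case 0
  have "d x * mpow K G 0 x y = (if x = y then d y else 0)" for x by simp
  then show ?case using fin 0 by simp
next
  case (Suc m)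
  have "(\<Sum>x\<in>K. d x * mpow K G (Suc m) x y) = (\<Sum>x\<in>K. \<Sum>z\<in>K. d x * mpow K G m x z * G z y)"
    by (simp add: sum_distrib_left mult.assoc)
  also have "\<dots> = (\<Sum>z\<in>K. \<Sum>x\<in>K. d x * mpow K G m x z * G z y)" by (rule sum.swap)
  also have "\<dots> = (\<Sum>z\<in>K. (\<Sum>x\<in>K. d x * mpow K G m x z) * G z y)"
    by (simp add: sum_distrib_right)
  also have "\<dots> = (\<Sum>z\<in>K. d z * G z y)" using Suc.IH by simp
  finally show ?case using inv Suc.prems by simp
qed

lemma mpow_right_inv:
  assumes fin: "finite K" and inv: "\<forall>x\<in>K. (\<Sum>y\<in>K. G x y * h y) = h x" and x: "x \<in> K"
  shows "(\<Sum>y\<in>K. mpow K G m x y * h y) = h x"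
proof (induction m)
  case 0
  have "mpow K G 0 x y * h y = (if x = y then h x else 0)" for y by simp
  then show ?case using fin x by simp
next
  case (Suc m)
  have "(\<Sum>y\<in>K. mpow K G (Suc m) x y * h y) = (\<Sum>y\<in>K. \<Sum>z\<in>K. mpow K G m x z * G z y * h y)"
    by (simp add: sum_distrib_right)
  also have "\<dots> = (\<Sum>z\<in>K. \<Sum>y\<in>K. mpow K G m x z * G z y * h y)" by (rule sum.swap)
  also have "\<dots> = (\<Sum>z\<in>K. mpow K G m x z * (\<Sum>y\<in>K. G z y * h y))"
    by (simp add: sum_distrib_left mult.assoc)
  also have "\<dots> = (\<Sum>z\<in>K. mpow K G m x z * h z)" using inv by simp
  finally show ?case using Suc.IH by simp
qed

lemma stat_unique:
  assumes fin: "finite K" and irr: "irreducible_on K G"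
    and wpos: "\<forall>x\<in>K. w x > 0" and winv: "\<forall>y\<in>K. (\<Sum>x\<in>K. w x * G x y) = w y" and wsum: "(\<Sum>x\<in>K. w x) = 1"
    and lnn: "\<forall>x\<in>K. l x \<ge> 0" and linv: "\<forall>y\<in>K. (\<Sum>x\<in>K. l x * G x y) = l y" and lsum: "(\<Sum>x\<in>K. l x) = 1"
    and x: "x \<in> K"
  shows "l x = w x"
proof -
  have Kne: "K \<noteq> {}" using x by auto
  define t where "t = Max ((\<lambda>x. l x / w x) ` K)"
  have "t \<in> (\<lambda>x. l x / w x) ` K" unfolding t_def using fin Kne by (intro Max_in) auto
  then obtain x0 where x0: "x0 \<in> K" "t = l x0 / w x0" by auto
  have tge: "l u / w u \<le> t" if "u \<in> K" for u using fin that unfolding t_def by auto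
  define d where "d u = t * w u - l u" for u
  have dnn: "d u \<ge> 0" if "u \<in> K" for u
    using tge[OF that] wpos that by (auto simp: d_def field_simps)
  have dx0: "d x0 = 0" using x0 wpos by (auto simp: d_def)
  have dinv: "\<forall>y\<in>K. (\<Sum>x\<in>K. d x * G x y) = d y"
  proof
    fix y assume y: "y \<in> K"
    have "(\<Sum>x\<in>K. d x * G x y) = (\<Sum>x\<in>K. t * (w x * G x y) - l x * G x y)"
      by (rule sum.cong) (auto simp: d_def algebra_simps)
    also have "\<dots> = t * (\<Sum>x\<in>K. w x * G x y) - (\<Sum>x\<in>K. l x * G x y)"
      by (simp only: sum_subtractf sum_distrib_left)
    finally have "(\<Sum>x\<in>K. d x * G x y) = t * (\<Sum>x\<in>K. w x * G x y) - (\<Sum>x\<in>K. l x * G x y)" .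
    then show "(\<Sum>x\<in>K. d x * G x y) = d y" using winv linv y by (simp add: d_def)
  qed
  have Gnn: "\<forall>x\<in>K. \<forall>y\<in>K. 0 \<le> G x y" using irr by (auto simp: irreducible_on_def)
  have d0: "d u = 0" if u: "u \<in> K" for u
  proof -
    obtain m where m: "mpow K G (Suc m) u x0 > 0" using irr u x0(1) unfolding irreducible_on_def by blast
    have "d u * mpow K G (Suc m) u x0 \<le> (\<Sum>x\<in>K. d x * mpow K G (Suc m) x x0)"
      using u fin dnn mpow_nonneg[OF Gnn x0(1)] by (intro member_le_sum) (auto simp del: mpow.simps intro!: mult_nonneg_nonneg)
    also have "\<dots> = d x0" by (rule mpow_left_inv[OF fin dinv x0(1)])
    also have "\<dots> = 0" by (rule dx0)
    finally show ?thesis using dnn[OF u] m by (simp add: mult_le_0_iff)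
  qed
  then have "l u = t * w u" if "u \<in> K" for u using that by (simp add: d_def)
  then have "(\<Sum>x\<in>K. l x) = t * (\<Sum>x\<in>K. w x)" by (simp add: sum_distrib_left)
  then have "t = 1" using lsum wsum by simp
  then show ?thesis using \<open>\<And>u. u \<in> K \<Longrightarrow> l u = t * w u\<close>[OF x] by simp
qed

lemma harm_const:
  assumes fin: "finite K" and irr: "irreducible_on K G"
    and rows: "\<forall>x\<in>K. (\<Sum>y\<in>K. G x y) = 1"
    and hinv: "\<forall>x\<in>K. (\<Sum>y\<in>K. G x y * h y) = h x"
    and x: "x \<in> K" and y: "y \<in> K"
  shows "h x = h y"
proof -
  have Kne: "K \<noteq> {}" using x by auto
  define t where "t = Min (h ` K)"
  have "t \<in> h ` K" unfolding t_def using fin Kne by (intro Min_in) auto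
  then obtain x0 where x0: "x0 \<in> K" "t = h x0" by auto
  have tle: "t \<le> h u" if "u \<in> K" for u using fin that unfolding t_def by auto
  define d where "d u = h u - t" for u
  have dnn: "d u \<ge> 0" if "u \<in> K" for u using tle[OF that] by (simp add: d_def)
  have dx0: "d x0 = 0" using x0 by (simp add: d_def)
  have dinv: "\<forall>x\<in>K. (\<Sum>y\<in>K. G x y * d y) = d x"
  proof
    fix x assume "x \<in> K"
    have "(\<Sum>y\<in>K. G x y * d y) = (\<Sum>y\<in>K. G x y * h y - G x y * t)"
      by (rule sum.cong) (auto simp: d_def algebra_simps)
    also have "\<dots> = (\<Sum>y\<in>K. G x y * h y) - (\<Sum>y\<in>K. G x y) * t"
      by (simp only: sum_subtractf sum_distrib_right)
    finally have "(\<Sum>y\<in>K. G x y * d y) = (\<Sum>y\<in>K. G x y * h y) - (\<Sum>y\<in>K. G x y) * t" .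
    then show "(\<Sum>y\<in>K. G x y * d y) = d x" using hinv rows \<open>x \<in> K\<close> by (simp add: d_def)
  qed
  have Gnn: "\<forall>x\<in>K. \<forall>y\<in>K. 0 \<le> G x y" using irr by (auto simp: irreducible_on_def)
  have d0: "d u = 0" if u: "u \<in> K" for u
  proof -
    obtain m where m: "mpow K G (Suc m) x0 u > 0" using irr u x0(1) unfolding irreducible_on_def by blast
    have "mpow K G (Suc m) x0 u * d u \<le> (\<Sum>y\<in>K. mpow K G (Suc m) x0 y * d y)"
      using u fin dnn mpow_nonneg[OF Gnn] by (intro member_le_sum) (auto simp del: mpow.simps intro!: mult_nonneg_nonneg)
    also have "\<dots> = d x0" by (rule mpow_right_inv[OF fin dinv x0(1)])
    also have "\<dots> = 0" by (rule dx0)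
    finally show ?thesis using dnn[OF u] m by (simp add: mult_le_0_iff)
  qed
  show ?thesis using d0[OF x] d0[OF y] by (simp add: d_def)
qed



lemma multi_bw:
  fixes f :: "nat \<Rightarrow> 'a \<Rightarrow> real"
  assumes "finite K" "\<And>n x. x \<in> K \<Longrightarrow> \<bar>f n x\<bar> \<le> C"
  shows "\<exists>r l. strict_mono r \<and> (\<forall>x\<in>K. (\<lambda>k. f (r k) x) \<longlonglongrightarrow> l x)"
  using assms
proof (induction K rule: finite_induct)
  case empty
  show ?case by (rule exI[of _ id]) (auto simp: strict_mono_def)
next
  case (insert a F)
  then obtain r l where r: "strict_mono r" "\<forall>x\<in>F. (\<lambda>k. f (r k) x) \<longlonglongrightarrow> l x" by auto
  have "bounded (range (\<lambda>k. f (r k) a))"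
    using insert.prems[of a] unfolding bounded_real by auto
  then obtain l' r' where r': "strict_mono r'" "((\<lambda>k. f (r k) a) \<circ> r') \<longlonglongrightarrow> l'"
    using bounded_imp_convergent_subsequence by blast
  have "strict_mono (r \<circ> r')" using r(1) r'(1) by (rule strict_mono_o)
  moreover have "\<forall>x\<in>insert a F. (\<lambda>k. f ((r \<circ> r') k) x) \<longlonglongrightarrow> (l(a := l')) x"
  proof
    fix x assume "x \<in> insert a F"
    then show "(\<lambda>k. f ((r \<circ> r') k) x) \<longlonglongrightarrow> (l(a := l')) x"
    proof
      assume "x = a" then show ?thesis using r'(2) by (simp add: o_def)
    next
      assume x: "x \<in> F"
      then have "x \<noteq> a" using insert.hyps by auto
      then show ?thesis using LIMSEQ_subseq_LIMSEQ[OF r(2)[rule_format, OF x] r'(1)] by (simp add: o_def)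
    qed
  qed
  ultimately show ?case by blast
qed

lemma subseq_principle:
  fixes \<mu> :: "nat \<Rightarrow> 'a \<Rightarrow> real"
  assumes fin: "finite K" and bnd: "\<And>n x. x \<in> K \<Longrightarrow> \<bar>\<mu> n x\<bar> \<le> C"
    and lim: "\<And>s l. strict_mono s \<Longrightarrow> (\<forall>x\<in>K. (\<lambda>k. \<mu> (s k) x) \<longlonglongrightarrow> l x) \<Longrightarrow> (\<forall>x\<in>K. l x = w x)"
    and x0: "x0 \<in> K"
  shows "(\<lambda>n. \<mu> n x0) \<longlonglongrightarrow> w x0"
proof (rule ccontr)
  assume "\<not> ?thesis"
  then obtain e where e: "e > 0" "\<not> eventually (\<lambda>n. dist (\<mu> n x0) (w x0) < e) sequentially"
    unfolding tendsto_iff by blast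
  define S where "S = {n. \<not> dist (\<mu> n x0) (w x0) < e}"
  have "\<forall>N. \<exists>n\<ge>N. n \<in> S"
  proof
    fix N
    show "\<exists>n\<ge>N. n \<in> S"
    proof (rule ccontr)
      assume "\<not> (\<exists>n\<ge>N. n \<in> S)"
      then have "\<forall>n\<ge>N. dist (\<mu> n x0) (w x0) < e" by (auto simp: S_def)
      then have "eventually (\<lambda>n. dist (\<mu> n x0) (w x0) < e) sequentially"
        unfolding eventually_sequentially by blast
      then show False using e(2) by contradiction
    qed
  qed
  then have "infinite S" by (rule infinite_nat_iff_unbounded_le[THEN iffD2])
  from infinite_enumerate[OF this] obtain s :: "nat \<Rightarrow> nat" where s: "strict_mono s" "\<forall>n. s n \<in> S" by blast
  have "\<exists>r l. strict_mono r \<and> (\<forall>x\<in>K. (\<lambda>k. \<mu> (s (r k)) x) \<longlonglongrightarrow> l x)"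
    using multi_bw[OF fin, of "\<lambda>k. \<mu> (s k)" C] bnd by blast
  then obtain r l where r: "strict_mono r" "\<forall>x\<in>K. (\<lambda>k. \<mu> (s (r k)) x) \<longlonglongrightarrow> l x"
    by blast
  have "strict_mono (s \<circ> r)" using s(1) r(1) by (rule strict_mono_o)
  then have "\<forall>x\<in>K. l x = w x" by (rule lim) (use r(2) in \<open>simp add: o_def\<close>)
  moreover have "(\<lambda>k. \<mu> (s (r k)) x0) \<longlonglongrightarrow> l x0" using r(2) x0 by blast
  ultimately have "(\<lambda>k. \<mu> (s (r k)) x0) \<longlonglongrightarrow> w x0" using x0 by simp
  from LIMSEQ_D[OF this e(1)] obtain N where N: "\<forall>k\<ge>N. norm (\<mu> (s (r k)) x0 - w x0) < e" by blast
  have "s (r N) \<in> S" using s(2) by blast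
  then have "\<not> norm (\<mu> (s (r N)) x0 - w x0) < e" by (simp add: S_def dist_norm)
  then show False using N by simp
qed



lemma cycle_formula:
  fixes P :: "'a::countable \<Rightarrow> 'a \<Rightarrow> real"
  assumes st: "stochastic_matrix P" and irr: "irreducible_chain P"
    and stat: "stationary_dist P \<pi>" and K: "finite K" "K \<noteq> {}"
  shows "(\<Sum>x\<in>K. ennreal (\<pi> x) * (\<Sum>j. \<integral>\<^sup>+z. kp P (UNIV - K) j x z * ennreal (f z) \<partial>cs)) =
         (\<integral>\<^sup>+z. ennreal (\<pi> z) * ennreal (f z) \<partial>cs)"
proof -
  have "(\<integral>\<^sup>+z. ennreal (\<pi> z) * ennreal (f z) \<partial>cs) =
        (\<integral>\<^sup>+z. (\<Sum>j. \<Sum>x\<in>K. ennreal (\<pi> x) * kp P (UNIV - K) j x z) * ennreal (f z) \<partial>cs)"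
    by (intro nn_integral_cong) (simp only: cycle_measure[OF st irr stat K, symmetric])
  also have "\<dots> = (\<integral>\<^sup>+z. (\<Sum>j. \<Sum>x\<in>K. ennreal (\<pi> x) * (kp P (UNIV - K) j x z * ennreal (f z))) \<partial>cs)"
    by (simp only: ennreal_suminf_multc[symmetric] sum_distrib_right mult.assoc)
  also have "\<dots> = (\<Sum>j. \<integral>\<^sup>+z. (\<Sum>x\<in>K. ennreal (\<pi> x) * (kp P (UNIV - K) j x z * ennreal (f z))) \<partial>cs)"
    by (rule nn_integral_suminf) simp
  also have "\<dots> = (\<Sum>j. \<Sum>x\<in>K. ennreal (\<pi> x) * (\<integral>\<^sup>+z. kp P (UNIV - K) j x z * ennreal (f z) \<partial>cs))"
    by (simp add: nn_integral_sum nn_integral_cmult)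
  also have "\<dots> = (\<Sum>x\<in>K. \<Sum>j. ennreal (\<pi> x) * (\<integral>\<^sup>+z. kp P (UNIV - K) j x z * ennreal (f z) \<partial>cs))"
    by (rule suminf_sum) (rule summableI)
  also have "\<dots> = (\<Sum>x\<in>K. ennreal (\<pi> x) * (\<Sum>j. \<integral>\<^sup>+z. kp P (UNIV - K) j x z * ennreal (f z) \<partial>cs))"
    by (simp only: ennreal_suminf_cmult)
  finally show ?thesis by simp
qed

definition Genn :: "('a \<Rightarrow> 'a \<Rightarrow> real) \<Rightarrow> 'a set \<Rightarrow> 'a set \<Rightarrow> 'a \<Rightarrow> 'a \<Rightarrow> ennreal" where
  "Genn P B K x y = (\<Sum>m. \<integral>\<^sup>+ z. kp P (B - K) m x z * ennreal (P z y) \<partial>count_space UNIV)"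

lemma hit_Genn: "hit_matrix P B K x y = enn2real (Genn P B K x y)"
  by (simp add: hit_matrix_def Genn_def)

lemma sum_as_int:
  assumes "finite K"
  shows "(\<Sum>y\<in>K. g y) = (\<integral>\<^sup>+y. indicator K y * g y \<partial>count_space UNIV)"
  using assms by (simp add: nn_integral_count_space_finite[symmetric] nn_integral_count_space_indicator mult.commute)

lemma Genn_rowsum:
  fixes P :: "'a::countable \<Rightarrow> 'a \<Rightarrow> real"
  assumes st: "stochastic_matrix P" and K: "finite K"
  shows "(\<Sum>y\<in>K. Genn P B K x y) \<le> 1"
proof -
  have "(\<Sum>y\<in>K. Genn P B K x y) = (\<Sum>m. \<Sum>y\<in>K. \<integral>\<^sup>+ z. kp P (B - K) m x z * ennreal (P z y) \<partial>cs)"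
    unfolding Genn_def by (rule suminf_sum[symmetric]) (rule summableI)
  also have "\<dots> \<le> (\<Sum>m. \<integral>\<^sup>+y. indicator (- (B - K)) y * (\<integral>\<^sup>+z. kp P (B - K) m x z * ennreal (P z y) \<partial>cs) \<partial>cs)"
  proof (intro suminf_le summableI allI)
    fix m
    show "(\<Sum>y\<in>K. \<integral>\<^sup>+ z. kp P (B - K) m x z * ennreal (P z y) \<partial>cs) \<le>
          (\<integral>\<^sup>+y. indicator (- (B - K)) y * (\<integral>\<^sup>+z. kp P (B - K) m x z * ennreal (P z y) \<partial>cs) \<partial>cs)"
      unfolding sum_as_int[OF K]
      by (intro nn_integral_mono mult_right_mono) (auto simp: indicator_def)
  qed
  also have "\<dots> \<le> 1" by (rule exit_bound[OF st])
  finally show ?thesis .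
qed

lemma Genn_le1:
  fixes P :: "'a::countable \<Rightarrow> 'a \<Rightarrow> real"
  assumes st: "stochastic_matrix P" and K: "finite K" and y: "y \<in> K"
  shows "Genn P B K x y \<le> 1"
proof -
  have "Genn P B K x y \<le> (\<Sum>y\<in>K. Genn P B K x y)"
    using K y by (intro member_le_sum) auto
  then show ?thesis using Genn_rowsum[OF st K] by (rule order_trans)
qed

lemma Genn_eq:
  fixes P :: "'a::countable \<Rightarrow> 'a \<Rightarrow> real"
  assumes st: "stochastic_matrix P" and K: "finite K" and y: "y \<in> K"
  shows "Genn P B K x y = ennreal (hit_matrix P B K x y)"
  using Genn_le1[OF assms, of B x] unfolding hit_Genn
  by (metis ennreal_enn2real ennreal_one_less_top le_less_trans less_irrefl)

lemma Genn_mono: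
  assumes "B \<subseteq> B'"
  shows "Genn P B K x y \<le> Genn P B' K x y"
  unfolding Genn_def
  by (intro suminf_le summableI allI nn_integral_mono mult_right_mono kp_nonneg_mono) (use assms in auto)



lemma mpow_mono:
  assumes "\<forall>x\<in>K. \<forall>y\<in>K. 0 \<le> G x y \<and> G x y \<le> H x y" "y \<in> K"
  shows "mpow K G m x y \<le> mpow K H m x y"
  using assms(2)
proof (induction m arbitrary: y)
  case 0 then show ?case by simp
next
  case (Suc m)
  have Hnn: "\<forall>x\<in>K. \<forall>y\<in>K. 0 \<le> H x y" using assms(1) by (meson order_trans)
  have Gnn: "\<forall>x\<in>K. \<forall>y\<in>K. 0 \<le> G x y" using assms(1) by blast
  show ?case unfolding mpow.simps
  proof (rule sum_mono)
    fix z assume z: "z \<in> K"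
    show "mpow K G m x z * G z y \<le> mpow K H m x z * H z y"
      using Suc.IH[OF z] mpow_nonneg[OF Hnn z] mpow_nonneg[OF Gnn z] assms(1) z Suc.prems
      by (intro mult_mono) auto
  qed
qed

locale mc =
  fixes P :: "'a::countable \<Rightarrow> 'a \<Rightarrow> real" and \<pi> :: "'a \<Rightarrow> real" and K :: "'a set"
    and B :: "nat \<Rightarrow> 'a set"
  assumes st: "stochastic_matrix P" and irr: "irreducible_chain P" and stat: "stationary_dist P \<pi>"
    and Kfin: "finite K" and Kne: "K \<noteq> {}" and Binc: "incseq B" and BU: "(\<Union>n. B n) = UNIV"
    and Girr: "\<And>n. irreducible_on K (hit_matrix P (B n) K)"
begin

abbreviation "Gl \<equiv> hit_matrix P UNIV K"

lemma G_nn: "0 \<le> hit_matrix P C K x y"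
  by (simp add: hit_Genn)

lemma G_lim:
  assumes y: "y \<in> K"
  shows "(\<lambda>n. hit_matrix P (B n) K x y) \<longlonglongrightarrow> Gl x y"
proof -
  have "(\<lambda>n. Genn P (B n) K x y) \<longlonglongrightarrow> Genn P UNIV K x y"
    unfolding Genn_def by (rule hit_lim_enn[OF Binc BU])
  then have "(\<lambda>n. ennreal (hit_matrix P (B n) K x y)) \<longlonglongrightarrow> ennreal (Gl x y)"
    by (simp add: Genn_eq[OF st Kfin y])
  then show ?thesis by (subst (asm) tendsto_ennreal_iff) (auto simp: G_nn)
qed

lemma G_le:
  assumes y: "y \<in> K"
  shows "hit_matrix P (B n) K x y \<le> Gl x y"
proof -
  have "Genn P (B n) K x y \<le> Genn P UNIV K x y" by (rule Genn_mono) auto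
  then show ?thesis by (simp add: Genn_eq[OF st Kfin y] G_nn ennreal_le_iff)
qed

lemma Gl_irr: "irreducible_on K Gl"
  unfolding irreducible_on_def
proof (intro ballI)
  fix x y assume x: "x \<in> K" and y: "y \<in> K"
  have A: "\<forall>z\<in>K. 0 \<le> Gl x z" by (simp add: G_nn)
  from Girr[of 0] x y obtain m where m: "mpow K (hit_matrix P (B 0) K) (Suc m) x y > 0"
    unfolding irreducible_on_def by blast
  have "mpow K (hit_matrix P (B 0) K) (Suc m) x y \<le> mpow K Gl (Suc m) x y"
    by (rule mpow_mono) (auto simp: G_nn G_le y)
  then have "0 < mpow K Gl (Suc m) x y" using m by linarith
  then have "\<exists>m. 0 < mpow K Gl (Suc m) x y" by blast
  then show "(\<forall>z\<in>K. 0 \<le> Gl x z) \<and> (\<exists>m. 0 < mpow K Gl (Suc m) x y)" using A by blast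
qed

lemma pi_nn: "0 \<le> \<pi> x" using stat by (simp add: stationary_dist_def)

lemma pi_pos:
  assumes x: "x \<in> K" shows "\<pi> x > 0"
proof -
  have "\<exists>u. \<pi> u > 0"
  proof (rule ccontr)
    assume "\<not> ?thesis"
    have "\<pi> u = 0" for u
    proof -
      have "\<not> \<pi> u > 0" using \<open>\<not> (\<exists>u. \<pi> u > 0)\<close> by blast
      then show ?thesis using pi_nn[of u] by linarith
    qed
    then have "(\<lambda>u. ennreal (\<pi> u)) = (\<lambda>_. 0)" by auto
    then show False using stat_total[OF stat] by simp
  qed
  then obtain u where u: "\<pi> u > 0" by blast
  obtain j where j: "kp P UNIV j u x > 0" using irr by (auto simp: irreducible_chain_def)
  have "ennreal (\<pi> u) * kp P UNIV j u x \<le> ennreal (\<pi> x)"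
    by (rule kp_pos_imp[OF stat_inv[OF st stat]])
  moreover have "ennreal (\<pi> u) * kp P UNIV j u x > 0" using u j by (simp add: ennreal_zero_less_mult_iff)
  ultimately have "ennreal (\<pi> x) > 0" by (rule less_le_trans[rotated])
  then show ?thesis by simp
qed

lemma Gl_stat:
  assumes y: "y \<in> K" shows "(\<Sum>x\<in>K. \<pi> x * Gl x y) = \<pi> y"
proof -
  have "(\<Sum>x\<in>K. ennreal (\<pi> x) * Genn P UNIV K x y) = (\<integral>\<^sup>+z. ennreal (\<pi> z) * ennreal (P z y) \<partial>cs)"
    unfolding Genn_def by (rule cycle_formula[OF st irr stat Kfin Kne])
  also have "\<dots> = ennreal (\<pi> y)" by (rule stat_inv[OF st stat])
  finally have "(\<Sum>x\<in>K. ennreal (\<pi> x) * ennreal (Gl x y)) = ennreal (\<pi> y)"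
    by (simp add: Genn_eq[OF st Kfin y])
  then have "ennreal (\<Sum>x\<in>K. \<pi> x * Gl x y) = ennreal (\<pi> y)"
    by (simp add: ennreal_mult'' pi_nn G_nn sum_ennreal[symmetric] )
  then show ?thesis using pi_nn G_nn by (simp add: sum_nonneg)
qed

lemma Gl_rowsum_le: "(\<Sum>y\<in>K. Gl x y) \<le> 1"
proof -
  have "ennreal (\<Sum>y\<in>K. Gl x y) = (\<Sum>y\<in>K. ennreal (Gl x y))" using G_nn by simp
  also have "\<dots> = (\<Sum>y\<in>K. Genn P UNIV K x y)"
    by (rule sum.cong) (auto simp: Genn_eq[OF st Kfin])
  also have "\<dots> \<le> 1" by (rule Genn_rowsum[OF st Kfin])
  finally show ?thesis by (simp add: ennreal_le_1)
qed

lemma Gl_rows: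
  assumes x: "x \<in> K" shows "(\<Sum>y\<in>K. Gl x y) = 1"
proof -
  have e1: "(\<Sum>x\<in>K. \<pi> x * (1 - (\<Sum>y\<in>K. Gl x y))) = (\<Sum>x\<in>K. \<pi> x) - (\<Sum>x\<in>K. \<Sum>y\<in>K. \<pi> x * Gl x y)"
    by (simp add: right_diff_distrib sum_subtractf sum_distrib_left)
  have e2: "(\<Sum>x\<in>K. \<Sum>y\<in>K. \<pi> x * Gl x y) = (\<Sum>y\<in>K. \<Sum>x\<in>K. \<pi> x * Gl x y)"
    by (rule sum.swap)
  have e3: "(\<Sum>y\<in>K. \<Sum>x\<in>K. \<pi> x * Gl x y) = (\<Sum>y\<in>K. \<pi> y)"
    by (rule sum.cong) (auto simp: Gl_stat)
  have "(\<Sum>x\<in>K. \<pi> x * (1 - (\<Sum>y\<in>K. Gl x y))) = 0" using e1 e2 e3 by simp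
  moreover have "\<forall>x\<in>K. 0 \<le> \<pi> x * (1 - (\<Sum>y\<in>K. Gl x y))"
    using pi_nn Gl_rowsum_le by simp
  ultimately have "\<forall>x\<in>K. \<pi> x * (1 - (\<Sum>y\<in>K. Gl x y)) = 0"
    using sum_nonneg_eq_0_iff[OF Kfin, of "\<lambda>x. \<pi> x * (1 - (\<Sum>y\<in>K. Gl x y))"] by simp
  then have "\<pi> x * (1 - (\<Sum>y\<in>K. Gl x y)) = 0" using x by blast
  then show ?thesis using pi_pos[OF x] by simp
qed

lemma rowsum_lim:
  assumes x: "x \<in> K" shows "(\<lambda>n. \<Sum>y\<in>K. hit_matrix P (B n) K x y) \<longlonglongrightarrow> 1"
  using tendsto_sum[of K "\<lambda>y n. hit_matrix P (B n) K x y" "\<lambda>y. Gl x y" sequentially] G_lim Gl_rows[OF x]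
  by simp

lemma C1: "(\<Sum>x\<in>K. ennreal (\<pi> x) * killed_reward P UNIV K r x) =
           (\<integral>\<^sup>+ x. ennreal (\<pi> x) * ennreal (r x) \<partial>count_space UNIV)"
  unfolding killed_reward_def by (rule cycle_formula[OF st irr stat Kfin Kne])

lemma C2: "(\<Sum>x\<in>K. ennreal (\<pi> x) * killed_time P UNIV K x) = 1"
  unfolding killed_time_def killed_reward_def
  using cycle_formula[OF st irr stat Kfin Kne, of "\<lambda>_. 1"] stat_total[OF stat] by simp

end



context mc
begin

definition w :: "'a \<Rightarrow> real" where "w x = \<pi> x / (\<Sum>y\<in>K. \<pi> y)"

lemma cK_pos: "(\<Sum>y\<in>K. \<pi> y) > 0"
  using Kne Kfin pi_pos by (meson ex_in_conv sum_pos)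

lemma w_pos: "x \<in> K \<Longrightarrow> w x > 0"
  using pi_pos cK_pos by (simp add: w_def)

lemma w_sum: "(\<Sum>x\<in>K. w x) = 1"
  using cK_pos by (simp add: w_def sum_divide_distrib[symmetric])

lemma w_stat: "y \<in> K \<Longrightarrow> (\<Sum>x\<in>K. w x * Gl x y) = w y"
  using Gl_stat[of y] by (simp add: w_def sum_divide_distrib[symmetric])

lemma prob_bound:
  fixes l :: "'a \<Rightarrow> real"
  assumes "\<forall>x\<in>K. 0 \<le> l x" "(\<Sum>x\<in>K. l x) = 1" "x \<in> K"
  shows "\<bar>l x\<bar> \<le> 1"
proof -
  have "l x \<le> (\<Sum>x\<in>K. l x)" by (rule member_le_sum) (use assms Kfin in auto)
  then show ?thesis using assms by auto
qed

lemma lim_nonneg: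
  assumes "(\<lambda>k. f k) \<longlonglongrightarrow> (l::real)" "\<And>k. 0 \<le> f k" shows "0 \<le> l"
  using assms by (intro LIMSEQ_le_const[of f l 0]) auto

lemma lim_sum1:
  assumes "\<forall>x\<in>K. (\<lambda>k. f k x) \<longlonglongrightarrow> (l x::real)" "\<And>k. (\<Sum>x\<in>K. f k x) = 1"
  shows "(\<Sum>x\<in>K. l x) = 1"
proof -
  have "(\<lambda>k. \<Sum>x\<in>K. f k x) \<longlonglongrightarrow> (\<Sum>x\<in>K. l x)" using assms(1) by (intro tendsto_sum) auto
  then show ?thesis using assms(2) by (simp add: LIMSEQ_const_iff)
qed

lemma G_lim_sub:
  assumes "strict_mono s" "y \<in> K"
  shows "(\<lambda>k. hit_matrix P (B (s k)) K x y) \<longlonglongrightarrow> Gl x y"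
  using LIMSEQ_subseq_LIMSEQ[OF G_lim[OF assms(2)] assms(1)] by (simp add: o_def)

lemma rowsum_lim_sub:
  assumes "strict_mono s" "x \<in> K"
  shows "(\<lambda>k. \<Sum>y\<in>K. hit_matrix P (B (s k)) K x y) \<longlonglongrightarrow> 1"
  using LIMSEQ_subseq_LIMSEQ[OF rowsum_lim[OF assms(2)] assms(1)] by (simp add: o_def)

lemma mu2_lim:
  fixes \<mu> :: "nat \<Rightarrow> 'a \<Rightarrow> real"
  assumes stn: "\<And>n. stationary_on K (row_normalize K (hit_matrix P (B n) K)) (\<mu> n)"
    and x0: "x0 \<in> K"
  shows "(\<lambda>n. \<mu> n x0) \<longlonglongrightarrow> w x0"
proof (rule subseq_principle[OF Kfin _ _ x0])
  fix n x assume "x \<in> K"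
  then show "\<bar>\<mu> n x\<bar> \<le> 1" using stn[of n] by (intro prob_bound) (auto simp: stationary_on_def)
next
  fix s :: "nat \<Rightarrow> nat" and l
  assume s: "strict_mono s" and conv: "\<forall>x\<in>K. (\<lambda>k. \<mu> (s k) x) \<longlonglongrightarrow> l x"
  have lnn: "\<forall>x\<in>K. 0 \<le> l x"
  proof
    fix x assume x: "x \<in> K"
    show "0 \<le> l x" by (rule lim_nonneg[OF conv[rule_format, OF x]]) (use stn x in \<open>auto simp: stationary_on_def\<close>)
  qed
  have lsum: "(\<Sum>x\<in>K. l x) = 1"
    by (rule lim_sum1[OF conv]) (use stn in \<open>auto simp: stationary_on_def\<close>)
  have linv: "\<forall>y\<in>K. (\<Sum>x\<in>K. l x * Gl x y) = l y"
  proof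
    fix y assume y: "y \<in> K"
    have "(\<lambda>k. \<Sum>x\<in>K. \<mu> (s k) x * row_normalize K (hit_matrix P (B (s k)) K) x y)
          \<longlonglongrightarrow> (\<Sum>x\<in>K. l x * (Gl x y / 1))"
      unfolding row_normalize_def
      by (intro tendsto_sum tendsto_mult tendsto_divide conv[rule_format] G_lim_sub[OF s y] rowsum_lim_sub[OF s]) auto
    moreover have "(\<lambda>k. \<Sum>x\<in>K. \<mu> (s k) x * row_normalize K (hit_matrix P (B (s k)) K) x y) = (\<lambda>k. \<mu> (s k) y)"
      using stn y by (auto simp: stationary_on_def)
    ultimately have "(\<lambda>k. \<mu> (s k) y) \<longlonglongrightarrow> (\<Sum>x\<in>K. l x * Gl x y)" by simp
    then show "(\<Sum>x\<in>K. l x * Gl x y) = l y" using conv y LIMSEQ_unique by blast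
  qed
  show "\<forall>x\<in>K. l x = w x"
    using stat_unique[OF Kfin Gl_irr _ _ w_sum lnn linv lsum] w_pos w_stat by blast
qed

end



context mc
begin

lemma lam_lim:
  fixes lam :: "nat \<Rightarrow> real" and \<nu> :: "nat \<Rightarrow> 'a \<Rightarrow> real"
  assumes \<nu>_pos: "\<And>n x. x \<in> K \<Longrightarrow> \<nu> n x > 0"
    and \<nu>_eig: "\<And>n y. y \<in> K \<Longrightarrow> (\<Sum>x\<in>K. \<nu> n x * hit_matrix P (B n) K x y) = lam n * \<nu> n y"
  shows "lam \<longlonglongrightarrow> 1"
proof -
  define SN where "SN n = (\<Sum>x\<in>K. \<nu> n x)" for n
  define rs where "rs n x = (\<Sum>y\<in>K. hit_matrix P (B n) K x y)" for n x
  have SN_pos: "SN n > 0" for n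
    unfolding SN_def using Kne Kfin \<nu>_pos by (meson ex_in_conv sum_pos)
  have bound: "\<bar>lam n - 1\<bar> \<le> (\<Sum>x\<in>K. \<bar>rs n x - 1\<bar>)" for n
  proof -
    have "lam n * SN n = (\<Sum>y\<in>K. lam n * \<nu> n y)" by (simp add: SN_def sum_distrib_left)
    also have "\<dots> = (\<Sum>y\<in>K. \<Sum>x\<in>K. \<nu> n x * hit_matrix P (B n) K x y)"
      by (rule sum.cong) (auto simp: \<nu>_eig)
    also have "\<dots> = (\<Sum>x\<in>K. \<Sum>y\<in>K. \<nu> n x * hit_matrix P (B n) K x y)" by (rule sum.swap)
    also have "\<dots> = (\<Sum>x\<in>K. \<nu> n x * rs n x)" by (simp add: rs_def sum_distrib_left)
    finally have e: "lam n * SN n = (\<Sum>x\<in>K. \<nu> n x * rs n x)" .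
    have e2: "(lam n - 1) * SN n = (\<Sum>x\<in>K. \<nu> n x * (rs n x - 1))"
      using e by (simp add: left_diff_distrib right_diff_distrib sum_subtractf SN_def)
    have "\<bar>\<Sum>x\<in>K. \<nu> n x * (rs n x - 1)\<bar> \<le> (\<Sum>x\<in>K. \<bar>\<nu> n x * (rs n x - 1)\<bar>)" by (rule sum_abs)
    also have "\<dots> \<le> (\<Sum>x\<in>K. SN n * \<bar>rs n x - 1\<bar>)"
    proof (rule sum_mono)
      fix x assume x: "x \<in> K"
      have "\<nu> n x \<le> SN n" unfolding SN_def
        by (rule member_le_sum) (use x Kfin \<nu>_pos less_imp_le in auto)
      then show "\<bar>\<nu> n x * (rs n x - 1)\<bar> \<le> SN n * \<bar>rs n x - 1\<bar>"
        using \<nu>_pos[of x n, OF x] by (simp add: abs_mult mult_right_mono)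
    qed
    also have "\<dots> = SN n * (\<Sum>x\<in>K. \<bar>rs n x - 1\<bar>)" by (simp add: sum_distrib_left)
    finally have A: "\<bar>\<Sum>x\<in>K. \<nu> n x * (rs n x - 1)\<bar> \<le> SN n * (\<Sum>x\<in>K. \<bar>rs n x - 1\<bar>)" .
    have "\<bar>lam n - 1\<bar> * SN n = \<bar>\<Sum>x\<in>K. \<nu> n x * (rs n x - 1)\<bar>"
      by (metis e2 abs_mult abs_of_pos SN_pos)
    then have "\<bar>lam n - 1\<bar> * SN n \<le> (\<Sum>x\<in>K. \<bar>rs n x - 1\<bar>) * SN n"
      using A by (simp add: mult.commute)
    then show ?thesis using SN_pos[of n] by (rule mult_right_le_imp_le)
  qed
  have "(\<lambda>n. \<Sum>x\<in>K. \<bar>rs n x - 1\<bar>) \<longlonglongrightarrow> (\<Sum>x\<in>K. 0)"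
  proof (rule tendsto_sum)
    fix x assume "x \<in> K"
    then have "(\<lambda>n. rs n x) \<longlonglongrightarrow> 1" unfolding rs_def by (rule rowsum_lim)
    then show "(\<lambda>n. \<bar>rs n x - 1\<bar>) \<longlonglongrightarrow> 0" by (intro tendsto_rabs_zero LIM_zero)
  qed
  then have g0: "(\<lambda>n. \<Sum>x\<in>K. \<bar>rs n x - 1\<bar>) \<longlonglongrightarrow> 0" by simp
  have ev: "\<forall>\<^sub>F n in sequentially. norm (lam n - 1) \<le> (\<Sum>x\<in>K. \<bar>rs n x - 1\<bar>)"
    by (intro always_eventually allI) (metis bound real_norm_def)
  have "(\<lambda>n. lam n - 1) \<longlonglongrightarrow> 0" by (rule Lim_null_comparison[OF ev g0])
  then show ?thesis by (rule LIM_zero_cancel)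
qed

lemma eta_lim:
  fixes lam :: "nat \<Rightarrow> real" and h :: "nat \<Rightarrow> 'a \<Rightarrow> real"
  assumes lamlim: "lam \<longlonglongrightarrow> 1" and h_pos: "\<And>n x. x \<in> K \<Longrightarrow> h n x > 0"
    and h_eig: "\<And>n x. x \<in> K \<Longrightarrow> (\<Sum>y\<in>K. hit_matrix P (B n) K x y * h n y) = lam n * h n x"
    and x0: "x0 \<in> K"
  shows "(\<lambda>n. h n x0 / (\<Sum>y\<in>K. h n y)) \<longlonglongrightarrow> 1 / real (card K)"
proof -
  define SH where "SH n = (\<Sum>y\<in>K. h n y)" for n
  define \<eta> where "\<eta> n x = h n x / SH n" for n x
  have SH_pos: "SH n > 0" for n
    unfolding SH_def using Kne Kfin h_pos by (meson ex_in_conv sum_pos)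
  have \<eta>nn: "\<forall>x\<in>K. 0 \<le> \<eta> n x" for n using h_pos SH_pos by (simp add: \<eta>_def less_imp_le)
  have \<eta>sum: "(\<Sum>x\<in>K. \<eta> n x) = 1" for n
    using SH_pos[of n] by (simp add: \<eta>_def SH_def sum_divide_distrib[symmetric])
  have \<eta>eig: "(\<Sum>y\<in>K. hit_matrix P (B n) K x y * \<eta> n y) = lam n * \<eta> n x" if x: "x \<in> K" for n x
  proof -
    have "(\<Sum>y\<in>K. hit_matrix P (B n) K x y * \<eta> n y) = (\<Sum>y\<in>K. hit_matrix P (B n) K x y * h n y) / SH n"
      by (simp add: \<eta>_def sum_divide_distrib)
    then show ?thesis using h_eig[OF x] by (simp add: \<eta>_def)
  qed
  have "(\<lambda>n. \<eta> n x0) \<longlonglongrightarrow> (\<lambda>_. 1 / real (card K)) x0"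
  proof (rule subseq_principle[OF Kfin _ _ x0])
    fix n x assume "x \<in> K"
    then show "\<bar>\<eta> n x\<bar> \<le> 1" using \<eta>nn \<eta>sum by (intro prob_bound) auto
  next
    fix s :: "nat \<Rightarrow> nat" and l
    assume s: "strict_mono s" and conv: "\<forall>x\<in>K. (\<lambda>k. \<eta> (s k) x) \<longlonglongrightarrow> l x"
    have lsum: "(\<Sum>x\<in>K. l x) = 1" by (rule lim_sum1[OF conv]) (rule \<eta>sum)
    have lams: "(\<lambda>k. lam (s k)) \<longlonglongrightarrow> 1"
      using LIMSEQ_subseq_LIMSEQ[OF lamlim s] by (simp add: o_def)
    have hinv: "\<forall>x\<in>K. (\<Sum>y\<in>K. Gl x y * l y) = l x"
    proof
      fix x assume x: "x \<in> K"
      have "(\<lambda>k. \<Sum>y\<in>K. hit_matrix P (B (s k)) K x y * \<eta> (s k) y) \<longlonglongrightarrow> (\<Sum>y\<in>K. Gl x y * l y)"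
        by (intro tendsto_sum tendsto_mult conv[rule_format] G_lim_sub[OF s])
      moreover have "(\<lambda>k. \<Sum>y\<in>K. hit_matrix P (B (s k)) K x y * \<eta> (s k) y) = (\<lambda>k. lam (s k) * \<eta> (s k) x)"
        using \<eta>eig[OF x] by simp
      moreover have "(\<lambda>k. lam (s k) * \<eta> (s k) x) \<longlonglongrightarrow> 1 * l x"
        by (intro tendsto_mult lams conv[rule_format] x)
      ultimately show "(\<Sum>y\<in>K. Gl x y * l y) = l x" using LIMSEQ_unique by fastforce
    qed
    have const: "l x = l y" if "x \<in> K" "y \<in> K" for x y
      by (rule harm_const[OF Kfin Gl_irr _ hinv that]) (simp add: Gl_rows)
    show "\<forall>x\<in>K. l x = 1 / real (card K)"
    proof
      fix x assume x: "x \<in> K"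
      have "(\<Sum>y\<in>K. l y) = (\<Sum>y\<in>K. l x)" by (rule sum.cong[OF refl]) (rule const[OF _ x])
      then have "real (card K) * l x = 1" using lsum by simp
      then show "l x = 1 / real (card K)" using Kfin Kne by (simp add: field_simps)
    qed
  qed
  then show ?thesis by (simp add: \<eta>_def SH_def)
qed

lemma mu1_lim:
  fixes lam :: "nat \<Rightarrow> real" and \<nu> h :: "nat \<Rightarrow> 'a \<Rightarrow> real"
  assumes \<nu>_pos: "\<And>n x. x \<in> K \<Longrightarrow> \<nu> n x > 0" and h_pos: "\<And>n x. x \<in> K \<Longrightarrow> h n x > 0"
    and \<nu>_eig: "\<And>n y. y \<in> K \<Longrightarrow> (\<Sum>x\<in>K. \<nu> n x * hit_matrix P (B n) K x y) = lam n * \<nu> n y"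
    and h_eig: "\<And>n x. x \<in> K \<Longrightarrow> (\<Sum>y\<in>K. hit_matrix P (B n) K x y * h n y) = lam n * h n x"
    and norm: "\<And>n. (\<Sum>x\<in>K. \<nu> n x * h n x) = 1"
    and x0: "x0 \<in> K"
  shows "(\<lambda>n. \<nu> n x0 * h n x0) \<longlonglongrightarrow> w x0"
proof -
  have lamlim: "lam \<longlonglongrightarrow> 1" by (rule lam_lim[OF \<nu>_pos \<nu>_eig])
  define \<eta> where "\<eta> n x = h n x / (\<Sum>y\<in>K. h n y)" for n x
  have SH_pos: "(\<Sum>y\<in>K. h n y) > 0" for n
    using Kne Kfin h_pos by (meson ex_in_conv sum_pos)
  have \<eta>lim: "(\<lambda>n. \<eta> n x) \<longlonglongrightarrow> 1 / real (card K)" if "x \<in> K" for x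
    unfolding \<eta>_def by (rule eta_lim[OF lamlim h_pos h_eig that])
  define \<mu> where "\<mu> n x = \<nu> n x * h n x" for n x
  have \<mu>nn: "\<forall>x\<in>K. 0 \<le> \<mu> n x" for n using \<nu>_pos h_pos by (simp add: \<mu>_def less_imp_le)
  have \<mu>sum: "(\<Sum>x\<in>K. \<mu> n x) = 1" for n using norm by (simp add: \<mu>_def)
  have rel: "lam n * \<mu> n y = (\<Sum>x\<in>K. \<mu> n x * hit_matrix P (B n) K x y * (\<eta> n y / \<eta> n x))"
    if y: "y \<in> K" for n y
  proof -
    have "(\<Sum>x\<in>K. \<mu> n x * hit_matrix P (B n) K x y * (\<eta> n y / \<eta> n x)) =
          (\<Sum>x\<in>K. \<nu> n x * hit_matrix P (B n) K x y * h n y)"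
    proof (rule sum.cong)
      fix x assume x: "x \<in> K"
      have e: "\<eta> n y / \<eta> n x = h n y / h n x" using SH_pos[of n] by (simp add: \<eta>_def)
      have hx: "h n x \<noteq> 0" using h_pos[OF x, of n] by simp
      show "\<mu> n x * hit_matrix P (B n) K x y * (\<eta> n y / \<eta> n x) = \<nu> n x * hit_matrix P (B n) K x y * h n y"
        unfolding e \<mu>_def using hx by (simp add: field_simps)
    qed simp
    also have "\<dots> = (\<Sum>x\<in>K. \<nu> n x * hit_matrix P (B n) K x y) * h n y" by (simp add: sum_distrib_right)
    also have "\<dots> = lam n * \<mu> n y" using \<nu>_eig[OF y] by (simp add: \<mu>_def)
    finally show ?thesis by simp
  qed
  have "(\<lambda>n. \<mu> n x0) \<longlonglongrightarrow> w x0"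
  proof (rule subseq_principle[OF Kfin _ _ x0])
    fix n x assume "x \<in> K"
    then show "\<bar>\<mu> n x\<bar> \<le> 1" using \<mu>nn \<mu>sum by (intro prob_bound) auto
  next
    fix s :: "nat \<Rightarrow> nat" and l
    assume s: "strict_mono s" and conv: "\<forall>x\<in>K. (\<lambda>k. \<mu> (s k) x) \<longlonglongrightarrow> l x"
    have lnn: "\<forall>x\<in>K. 0 \<le> l x"
    proof
      fix x assume x: "x \<in> K"
      show "0 \<le> l x" by (rule lim_nonneg[OF conv[rule_format, OF x]]) (use \<mu>nn x in auto)
    qed
    have lsum: "(\<Sum>x\<in>K. l x) = 1" by (rule lim_sum1[OF conv]) (rule \<mu>sum)
    have lams: "(\<lambda>k. lam (s k)) \<longlonglongrightarrow> 1"
      using LIMSEQ_subseq_LIMSEQ[OF lamlim s] by (simp add: o_def)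
    have \<eta>s: "(\<lambda>k. \<eta> (s k) x) \<longlonglongrightarrow> 1 / real (card K)" if "x \<in> K" for x
      using LIMSEQ_subseq_LIMSEQ[OF \<eta>lim[OF that] s] by (simp add: o_def)
    have cK: "1 / real (card K) \<noteq> 0" using Kfin Kne by simp
    have linv: "\<forall>y\<in>K. (\<Sum>x\<in>K. l x * Gl x y) = l y"
    proof
      fix y assume y: "y \<in> K"
      have "(\<lambda>k. \<Sum>x\<in>K. \<mu> (s k) x * hit_matrix P (B (s k)) K x y * (\<eta> (s k) y / \<eta> (s k) x))
            \<longlonglongrightarrow> (\<Sum>x\<in>K. l x * Gl x y * ((1 / real (card K)) / (1 / real (card K))))"
        by (intro tendsto_sum tendsto_mult tendsto_divide conv[rule_format] G_lim_sub[OF s y] \<eta>s y cK)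
      then have "(\<lambda>k. lam (s k) * \<mu> (s k) y) \<longlonglongrightarrow> (\<Sum>x\<in>K. l x * Gl x y)"
        using cK by (simp add: rel[OF y])
      moreover have "(\<lambda>k. lam (s k) * \<mu> (s k) y) \<longlonglongrightarrow> 1 * l y"
        by (intro tendsto_mult lams conv[rule_format] y)
      ultimately show "(\<Sum>x\<in>K. l x * Gl x y) = l y" using LIMSEQ_unique by fastforce
    qed
    show "\<forall>x\<in>K. l x = w x"
      using stat_unique[OF Kfin Gl_irr _ _ w_sum lnn linv lsum] w_pos w_stat by blast
  qed
  then show ?thesis by (simp add: \<mu>_def)
qed

end



lemma tendsto_inverse_enn:
  fixes f :: "nat \<Rightarrow> ennreal"
  assumes "f \<longlonglongrightarrow> l" shows "(\<lambda>n. inverse (f n)) \<longlonglongrightarrow> inverse l"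
proof -
  have "continuous_on UNIV (\<lambda>x::ennreal. inverse x)"
    by (intro continuous_on_inverse_ennreal continuous_on_id)
  then show ?thesis using assms by (rule continuous_on_tendsto_compose) auto
qed

context mc
begin

lemma final_lim:
  fixes \<mu> :: "nat \<Rightarrow> 'a \<Rightarrow> real" and r :: "'a \<Rightarrow> real"
  assumes conv: "\<And>x. x \<in> K \<Longrightarrow> (\<lambda>n. \<mu> n x) \<longlonglongrightarrow> w x" and r_nonneg: "\<And>x. r x \<ge> 0"
  shows "(\<lambda>n. tilde_pi P (B n) K (\<mu> n) r) \<longlonglongrightarrow> (\<integral>\<^sup>+ x. ennreal (\<pi> x * r x) \<partial>count_space UNIV)"
proof -
  define c where "c = (\<Sum>y\<in>K. \<pi> y)"
  have c: "c > 0" unfolding c_def by (rule cK_pos)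
  define L where "L = (\<integral>\<^sup>+ x. ennreal (\<pi> x * r x) \<partial>count_space UNIV)"
  have wsplit: "ennreal (w x) = ennreal (1 / c) * ennreal (\<pi> x)" for x
    using c pi_nn[of x] by (simp add: w_def c_def ennreal_mult[symmetric])
  have Nlim: "(\<lambda>n. \<Sum>x\<in>K. ennreal (\<mu> n x) * killed_reward P (B n) K f x) \<longlonglongrightarrow>
              (\<Sum>x\<in>K. ennreal (w x) * killed_reward P UNIV K f x)" for f
  proof (rule tendsto_sum)
    fix x assume x: "x \<in> K"
    show "(\<lambda>n. ennreal (\<mu> n x) * killed_reward P (B n) K f x) \<longlonglongrightarrow> ennreal (w x) * killed_reward P UNIV K f x"
      by (rule tendsto_mult_ennreal[OF tendsto_ennrealI[OF conv[OF x]] killed_reward_lim[OF Binc BU]])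
         (use w_pos[OF x] in auto)
  qed
  have N: "(\<Sum>x\<in>K. ennreal (w x) * killed_reward P UNIV K r x) = ennreal (1 / c) * L"
  proof -
    have "(\<Sum>x\<in>K. ennreal (w x) * killed_reward P UNIV K r x) =
          ennreal (1 / c) * (\<Sum>x\<in>K. ennreal (\<pi> x) * killed_reward P UNIV K r x)"
      by (simp add: wsplit sum_distrib_left mult.assoc)
    also have "\<dots> = ennreal (1 / c) * (\<integral>\<^sup>+ x. ennreal (\<pi> x) * ennreal (r x) \<partial>count_space UNIV)"
      by (simp only: C1)
    also have "\<dots> = ennreal (1 / c) * L"
      unfolding L_def using pi_nn r_nonneg by (simp add: ennreal_mult)
    finally show ?thesis .
  qed
  have D: "(\<Sum>x\<in>K. ennreal (w x) * killed_time P UNIV K x) = ennreal (1 / c)"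
  proof -
    have "(\<Sum>x\<in>K. ennreal (w x) * killed_time P UNIV K x) =
          ennreal (1 / c) * (\<Sum>x\<in>K. ennreal (\<pi> x) * killed_time P UNIV K x)"
      by (simp add: wsplit sum_distrib_left mult.assoc)
    then show ?thesis by (simp add: C2)
  qed
  have Nl: "(\<lambda>n. \<Sum>x\<in>K. ennreal (\<mu> n x) * killed_reward P (B n) K r x) \<longlonglongrightarrow> ennreal (1 / c) * L"
    using Nlim[of r] N by simp
  have Dl: "(\<lambda>n. \<Sum>x\<in>K. ennreal (\<mu> n x) * killed_time P (B n) K x) \<longlonglongrightarrow> ennreal (1 / c)"
    using Nlim[of "\<lambda>_. 1"] D by (simp add: killed_time_def)
  have inv: "inverse (ennreal (1 / c)) = ennreal c" using c by (simp add: inverse_ennreal)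
  have Il: "(\<lambda>n. inverse (\<Sum>x\<in>K. ennreal (\<mu> n x) * killed_time P (B n) K x)) \<longlonglongrightarrow> ennreal c"
    using tendsto_inverse_enn[OF Dl] inv by simp
  have "(\<lambda>n. (\<Sum>x\<in>K. ennreal (\<mu> n x) * killed_reward P (B n) K r x) *
             inverse (\<Sum>x\<in>K. ennreal (\<mu> n x) * killed_time P (B n) K x)) \<longlonglongrightarrow> (ennreal (1 / c) * L) * ennreal c"
    by (rule tendsto_mult_ennreal[OF Nl Il]) (use c in auto)
  moreover have "(ennreal (1 / c) * L) * ennreal c = L"
  proof -
    have "ennreal (1 / c) * ennreal c = 1" using c by (simp add: ennreal_mult[symmetric])
    then show ?thesis by (metis mult.assoc mult.commute mult_1)
  qed
  ultimately show ?thesis unfolding tilde_pi_def divide_ennreal_def L_def by simp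
qed

end

theorem proposition2p4:
  fixes P :: "'a::countable \<Rightarrow> 'a \<Rightarrow> real"
    and \<pi> :: "'a \<Rightarrow> real"
    and K :: "'a set"
    and A :: "nat \<Rightarrow> 'a set"
    and r :: "'a \<Rightarrow> real"
    and lam :: "nat \<Rightarrow> real"
    and \<nu> h :: "nat \<Rightarrow> 'a \<Rightarrow> real"
    and \<pi>2 :: "nat \<Rightarrow> 'a \<Rightarrow> real"
  assumes stoch: "stochastic_matrix P"
    and irr: "irreducible_chain P"
    and posrec: "positive_recurrent P"
    and stat: "stationary_dist P \<pi>"
    and K: "finite K" "K \<noteq> {}"
    and A_fin: "\<And>n. n \<ge> 1 \<Longrightarrow> finite (A n)"
    and A_K: "\<And>n. n \<ge> 1 \<Longrightarrow> K \<subseteq> A n"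
    and A_mono: "\<And>n. n \<ge> 1 \<Longrightarrow> A n \<subseteq> A (Suc n)"
    and A_union: "(\<Union>n\<in>{1..}. A n) = UNIV"
    and G_irr: "\<And>n. n \<ge> 1 \<Longrightarrow> irreducible_on K (hit_matrix P (A n) K)"
    and lam_pos: "\<And>n. n \<ge> 1 \<Longrightarrow> lam n > 0"
    and \<nu>_pos: "\<And>n x. n \<ge> 1 \<Longrightarrow> x \<in> K \<Longrightarrow> \<nu> n x > 0"
    and h_pos: "\<And>n x. n \<ge> 1 \<Longrightarrow> x \<in> K \<Longrightarrow> h n x > 0"
    and \<nu>_eig: "\<And>n y. n \<ge> 1 \<Longrightarrow> y \<in> K \<Longrightarrow>
        (\<Sum>x\<in>K. \<nu> n x * hit_matrix P (A n) K x y) = lam n * \<nu> n y"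
    and h_eig: "\<And>n x. n \<ge> 1 \<Longrightarrow> x \<in> K \<Longrightarrow>
        (\<Sum>y\<in>K. hit_matrix P (A n) K x y * h n y) = lam n * h n x"
    and norm: "\<And>n. n \<ge> 1 \<Longrightarrow> (\<Sum>x\<in>K. \<nu> n x * h n x) = 1"
    and \<pi>2_stat: "\<And>n. n \<ge> 1 \<Longrightarrow>
        stationary_on K (row_normalize K (hit_matrix P (A n) K)) (\<pi>2 n)"
    and r_nonneg: "\<And>x. r x \<ge> 0"
  shows "((\<lambda>n. tilde_pi P (A n) K (\<lambda>x. \<nu> n x * h n x) r)
           \<longlonglongrightarrow> (\<integral>\<^sup>+ x. ennreal (\<pi> x * r x) \<partial>count_space UNIV)) \<and>
         ((\<lambda>n. tilde_pi P (A n) K (\<pi>2 n) r)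
           \<longlonglongrightarrow> (\<integral>\<^sup>+ x. ennreal (\<pi> x * r x) \<partial>count_space UNIV))"
proof -
  define B where "B n = A (Suc n)" for n
  have Binc: "incseq B" unfolding B_def by (rule incseq_SucI) (use A_mono in auto)
  have BU: "(\<Union>n. B n) = UNIV"
  proof -
    have "x \<in> (\<Union>n. B n)" for x
    proof -
      from A_union obtain n where "n \<in> {1..}" "x \<in> A n" by blast
      then obtain m where "n = Suc m" by (cases n) auto
      then show ?thesis using \<open>x \<in> A n\<close> by (auto simp: B_def)
    qed
    then show ?thesis by auto
  qed
  interpret mc P \<pi> K B
    using stoch irr stat K Binc BU G_irr by unfold_locales (auto simp: B_def)
  have c1: "(\<lambda>n. tilde_pi P (B n) K (\<lambda>x. \<nu> (Suc n) x * h (Suc n) x) r)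
           \<longlonglongrightarrow> (\<integral>\<^sup>+ x. ennreal (\<pi> x * r x) \<partial>count_space UNIV)"
  proof (rule final_lim[OF _ r_nonneg])
    fix x assume x: "x \<in> K"
    show "(\<lambda>n. \<nu> (Suc n) x * h (Suc n) x) \<longlonglongrightarrow> w x"
      by (rule mu1_lim[where lam="\<lambda>n. lam (Suc n)" and \<nu>="\<lambda>n. \<nu> (Suc n)" and h="\<lambda>n. h (Suc n)", OF _ _ _ _ _ x])
         (auto simp: B_def intro!: \<nu>_pos h_pos \<nu>_eig h_eig norm)
  qed
  have c2: "(\<lambda>n. tilde_pi P (B n) K (\<pi>2 (Suc n)) r)
           \<longlonglongrightarrow> (\<integral>\<^sup>+ x. ennreal (\<pi> x * r x) \<partial>count_space UNIV)"
  proof (rule final_lim[OF _ r_nonneg])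
    fix x assume x: "x \<in> K"
    show "(\<lambda>n. \<pi>2 (Suc n) x) \<longlonglongrightarrow> w x"
      by (rule mu2_lim[where \<mu>="\<lambda>n. \<pi>2 (Suc n)", OF _ x]) (auto simp: B_def intro!: \<pi>2_stat)
  qed
  show ?thesis
    using LIMSEQ_imp_Suc[of "\<lambda>n. tilde_pi P (A n) K (\<lambda>x. \<nu> n x * h n x) r"]
          LIMSEQ_imp_Suc[of "\<lambda>n. tilde_pi P (A n) K (\<pi>2 n) r"] c1 c2
    by (simp add: B_def)
qed


end
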